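(* Let $X$ be a real Banach space, $I=\{1,\ldots,m\}$, $f_i\colon X\to\mathbb{R}$ ($i\in I$), $M=\{x\in X\mid f_i(x)=0\ \forall i\in I\}$ and $\overline{x}\in M$. Let the functions $f_i$, $i\in I$, be continuous in a neighbourhood of $\overline{x}$ and quasidifferentiable at $\overline{x}$ uniformly along finite dimensional spaces, with given quasidifferentials. Let $x_i^*\in\underline{\partial} f_i(\overline{x})$ and $y_i^*\in\overline{\partial} f_i(\overline{x})$, $i\in I$, be such that, with $C_i=(\underline{\partial} f_i(\overline{x})+y_i^* )\cup(-x_i^*-\overline{\partial} f_i(\overline{x}))$, $$C_i\cap\operatorname{cl}^*\operatorname{cone}\{-C_k\mid k\ne i\}=\emptyset\quad\forall i\in I$$ (in particular, if $m=1$, it suffices that $0\notin\underline{\partial} f_1(\overline{x})+y_1^*$ and $0\notin x_1^*+\overline{\partial} f_1(\overline{x})$). Then $$\Big\{v\in X\Bigm| s(\underline{\partial} f_i(\overline{x})+y_i^*,v)\le0,\ s(-x_i^*-\overline{\partial} f_i(\overline{x}),v)\le0,\ i\in I\Big\}\subseteq T_M(\overline{x}).$$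
   Context: $X^*$ is the dual with pairing $\langle\cdot,\cdot\rangle$; $\operatorname{cl}^*$ is weak$^*$ closure. $f$ is d.d. at $x$ if $f'(x,v)=\lim_{\alpha\to+0}(f(x+\alpha v)-f(x))/\alpha$ exists finitely for all $v$; d.d. uniformly along finite dimensional spaces if moreover for any $v$, any finite dimensional subspace $X_0$ and $\varepsilon>0$ there is $\delta>0$ with $|(f(x+\alpha v')-f(x))/\alpha-f'(x,v)|<\varepsilon$ whenever $0<\alpha<\delta$, $v'\in v+X_0$, $\|v'-v\|<\delta$. $f$ is quasidifferentiable at $x$ if d.d. and there is a pair $[\underline{\partial} f(x),\overline{\partial} f(x)]$ of convex weak$^*$ compact subsets of $X^*$ with $f'(x,v)=\max_{x^*\in\underline{\partial} f(x)}\langle x^*,v\rangle+\min_{y^*\in\overline{\partial} f(x)}\langle y^*,v\rangle$; uniformly along finite dimensional spaces if also d.d. in that uniform sense. A specific quasidifferential is fixed for each function. $s(C,v)=\sup_{x^*\in C}\langle x^*,v\rangle$; $\operatorname{cone}$ of a family of sets is the set of finite nonnegative combinations of elements of their union. $T_M(x)$ is the contingent cone: all $v$ with $\alpha_n\to+0$, $v_n\to v$, $x+\alpha_nv_n\in M$. *)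

theory Defs
  imports "HOL-Analysis.Analysis"
begin

text \<open>The dual space X* is modelled as the set of bounded (continuous) linear
functionals X \<Rightarrow> real; the pairing is function application.  The weak* topology
is the topology of pointwise convergence, i.e. the subspace topology induced on
the dual by the product topology of the function type.\<close>

definition dual_space :: "('a::real_normed_vector \<Rightarrow> real) set" where
  "dual_space = {\<phi>. bounded_linear \<phi>}"

definition wstar_closure :: "('a::real_normed_vector \<Rightarrow> real) set \<Rightarrow> ('a \<Rightarrow> real) set" where
  "wstar_closure S = closure S \<inter> dual_space"

text \<open>Convex weak* compact subset of X* (nonempty, as max/min are taken over it).\<close>
definition wstar_convex_compact :: "('a::real_normed_vector \<Rightarrow> real) set \<Rightarrow> bool" where
  "wstar_convex_compact C \<longleftrightarrow> C \<subseteq> dual_space \<and> C \<noteq> {} \<and> compact C \<and>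
     (\<forall>\<phi>\<in>C. \<forall>\<psi>\<in>C. \<forall>t::real. 0 \<le> t \<and> t \<le> 1 \<longrightarrow> (\<lambda>x. t * \<phi> x + (1 - t) * \<psi> x) \<in> C)"

definition supp :: "('a \<Rightarrow> real) set \<Rightarrow> 'a \<Rightarrow> real" where
  "supp C v = Sup ((\<lambda>\<phi>. \<phi> v) ` C)"

definition fplus :: "('a \<Rightarrow> real) set \<Rightarrow> ('a \<Rightarrow> real) \<Rightarrow> ('a \<Rightarrow> real) set" where
  "fplus A y = (\<lambda>\<phi>. \<lambda>x. \<phi> x + y x) ` A"

definition fneg :: "('a \<Rightarrow> real) set \<Rightarrow> ('a \<Rightarrow> real) set" where
  "fneg A = (\<lambda>\<phi>. \<lambda>x. - \<phi> x) ` A"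

definition cone_fam :: "('a \<Rightarrow> real) set set \<Rightarrow> ('a \<Rightarrow> real) set" where
  "cone_fam F = {\<phi>. \<exists>S c. finite S \<and> S \<subseteq> \<Union>F \<and> (\<forall>\<psi>\<in>S. c \<psi> \<ge> (0::real)) \<and>
                        \<phi> = (\<lambda>x. \<Sum>\<psi>\<in>S. c \<psi> * \<psi> x)}"

definition dir_diff :: "('a::real_normed_vector \<Rightarrow> real) \<Rightarrow> 'a \<Rightarrow> bool" where
  "dir_diff f x \<longleftrightarrow> (\<forall>v. \<exists>L. ((\<lambda>\<alpha>. (f (x + \<alpha> *\<^sub>R v) - f x) / \<alpha>) \<longlongrightarrow> L) (at_right 0))"

definition dderiv :: "('a::real_normed_vector \<Rightarrow> real) \<Rightarrow> 'a \<Rightarrow> 'a \<Rightarrow> real" where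
  "dderiv f x v = Lim (at_right 0) (\<lambda>\<alpha>. (f (x + \<alpha> *\<^sub>R v) - f x) / \<alpha>)"

text \<open>Directionally differentiable uniformly along finite dimensional spaces
(a finite dimensional subspace is the span of a finite set).\<close>
definition dir_diff_unif :: "('a::real_normed_vector \<Rightarrow> real) \<Rightarrow> 'a \<Rightarrow> bool" where
  "dir_diff_unif f x \<longleftrightarrow> dir_diff f x \<and>
     (\<forall>v B \<epsilon>. finite B \<and> \<epsilon> > 0 \<longrightarrow>
        (\<exists>\<delta>>0. \<forall>\<alpha> v'. 0 < \<alpha> \<and> \<alpha> < \<delta> \<and> v' - v \<in> span B \<and> norm (v' - v) < \<delta> \<longrightarrow>
            \<bar>(f (x + \<alpha> *\<^sub>R v') - f x) / \<alpha> - dderiv f x v\<bar> < \<epsilon>))"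

text \<open>(max/min over weak* compact sets are written as Sup/Inf, which are attained.) [Dl, Du] is a quasidifferential of f at x, uniformly along finite dimensional spaces.\<close>
definition quasidiff_unif ::
  "('a::real_normed_vector \<Rightarrow> real) \<Rightarrow> 'a \<Rightarrow> ('a \<Rightarrow> real) set \<Rightarrow> ('a \<Rightarrow> real) set \<Rightarrow> bool" where
  "quasidiff_unif f x Dl Du \<longleftrightarrow> dir_diff_unif f x \<and>
     wstar_convex_compact Dl \<and> wstar_convex_compact Du \<and>
     (\<forall>v. dderiv f x v = Sup ((\<lambda>\<phi>. \<phi> v) ` Dl) + Inf ((\<lambda>\<psi>. \<psi> v) ` Du))"

definition contingent_cone :: "'a::real_normed_vector set \<Rightarrow> 'a \<Rightarrow> 'a set" where
  "contingent_cone M x = {v. \<exists>\<alpha> u. (\<forall>n. \<alpha> n > 0) \<and> \<alpha> \<longlonglongrightarrow> 0 \<and> u \<longlonglongrightarrow> v \<and>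
                                  (\<forall>n. x + \<alpha> n *\<^sub>R u n \<in> M)}"

end

theory Submission
  imports Defs "HOL-Homology.Homology"
begin
definition fconv :: "('a \<Rightarrow> real) set \<Rightarrow> bool" where
  "fconv S \<longleftrightarrow> (\<forall>a\<in>S. \<forall>b\<in>S. \<forall>t. 0 \<le> (t::real) \<and> t \<le> 1 \<longrightarrow> (\<lambda>x. t * a x + (1 - t) * b x) \<in> S)"

lemma fconv_fplus: "fconv S \<Longrightarrow> fconv (fplus S y)"
  unfolding fconv_def fplus_def
proof (clarify)
  fix a b and t :: real assume H: "\<forall>a\<in>S. \<forall>b\<in>S. \<forall>t. 0 \<le> (t::real) \<and> t \<le> 1 \<longrightarrow> (\<lambda>x. t * a x + (1 - t) * b x) \<in> S"
    and a: "a \<in> S" and b: "b \<in> S" and t: "0 \<le> t" "t \<le> 1"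
  have "(\<lambda>x. t * a x + (1 - t) * b x) \<in> S" using H a b t by blast
  moreover have "(\<lambda>x. t * (a x + y x) + (1 - t) * (b x + y x)) = (\<lambda>x. (\<lambda>x. t * a x + (1 - t) * b x) x + y x)"
    by (auto simp: algebra_simps)
  ultimately show "(\<lambda>x. t * (a x + y x) + (1 - t) * (b x + y x)) \<in> (\<lambda>\<phi> x. \<phi> x + y x) ` S" by auto
qed

lemma fconv_fneg: "fconv S \<Longrightarrow> fconv (fneg S)"
  unfolding fconv_def fneg_def
proof (clarify)
  fix a b and t :: real assume H: "\<forall>a\<in>S. \<forall>b\<in>S. \<forall>t. 0 \<le> (t::real) \<and> t \<le> 1 \<longrightarrow> (\<lambda>x. t * a x + (1 - t) * b x) \<in> S"
    and a: "a \<in> S" and b: "b \<in> S" and t: "0 \<le> t" "t \<le> 1"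
  have m: "(\<lambda>x. t * a x + (1 - t) * b x) \<in> S" using H a b t by blast
  have e: "(\<lambda>x. t * (- a x) + (1 - t) * (- b x)) = (\<lambda>\<phi> x. - \<phi> x) (\<lambda>x. t * a x + (1 - t) * b x)"
    by (auto simp: algebra_simps)
  show "(\<lambda>x. t * (- a x) + (1 - t) * (- b x)) \<in> (\<lambda>\<phi> x. - \<phi> x) ` S"
    unfolding e by (rule imageI[OF m])
qed

lemma compact_fplus: "compact S \<Longrightarrow> compact (fplus S y)"
  unfolding fplus_def
proof (rule compact_continuous_image)
  show "continuous_on S (\<lambda>\<phi> x. \<phi> x + y x)"
    by (intro continuous_on_coordinatewise_then_product continuous_on_add continuous_on_const)
      (rule continuous_on_subset[OF continuous_on_product_coordinates], simp)
qed

lemma compact_fneg: "compact S \<Longrightarrow> compact (fneg S)"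
  unfolding fneg_def
proof (rule compact_continuous_image)
  show "continuous_on S (\<lambda>\<phi> x. - \<phi> x)"
    by (intro continuous_on_coordinatewise_then_product continuous_on_minus)
      (rule continuous_on_subset[OF continuous_on_product_coordinates], simp)
qed

lemma eval_bounded:
  assumes "compact (S :: ('a \<Rightarrow> real) set)"
  shows "bdd_above ((\<lambda>\<phi>. \<phi> w) ` S)" "bdd_below ((\<lambda>\<phi>. \<phi> w) ` S)"
proof -
  have "compact ((\<lambda>\<phi>. \<phi> w) ` S)"
    by (intro compact_continuous_image assms) (rule continuous_on_subset[OF continuous_on_product_coordinates], simp)
  then have "bounded ((\<lambda>\<phi>. \<phi> w) ` S)" by (rule compact_imp_bounded)
  then show "bdd_above ((\<lambda>\<phi>. \<phi> w) ` S)" "bdd_below ((\<lambda>\<phi>. \<phi> w) ` S)"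
    by (auto intro: bounded_imp_bdd_above bounded_imp_bdd_below)
qed

lemma supp_upper: "compact S \<Longrightarrow> a \<in> S \<Longrightarrow> a w \<le> supp S w"
  unfolding supp_def by (rule cSup_upper) (auto intro: eval_bounded)

lemma supp_least: "S \<noteq> {} \<Longrightarrow> (\<And>a. a \<in> S \<Longrightarrow> a w \<le> c) \<Longrightarrow> supp S w \<le> c"
  unfolding supp_def by (rule cSup_least) auto

lemma linear_fplus: "linear a \<Longrightarrow> linear y \<Longrightarrow> linear (\<lambda>x. a x + y x)"
  by (rule real_vector.linear_compose_add)

lemma lin_fplus_mem: "(\<forall>a\<in>S. linear a) \<Longrightarrow> linear y \<Longrightarrow> b \<in> fplus S y \<Longrightarrow> linear b"
  unfolding fplus_def by (auto intro: linear_fplus)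

lemma lin_fneg_mem: "(\<forall>a\<in>S. linear a) \<Longrightarrow> b \<in> fneg S \<Longrightarrow> linear b"
  unfolding fneg_def by (auto intro: linear_compose_neg)

lemma dual_linear: "S \<subseteq> dual_space \<Longrightarrow> \<forall>a\<in>S. linear a"
  unfolding dual_space_def by (auto intro: bounded_linear.linear)

lemma qd_bounds:
  assumes q: "quasidiff_unif f x Dl Du" and xs: "xs \<in> Dl" and ys: "ys \<in> Du"
  shows "dderiv f x w \<le> supp (fplus Dl ys) w"
    and "- supp (fplus (fneg Du) (\<lambda>x. - xs x)) w \<le> dderiv f x w"
proof -
  have cDl: "compact Dl" and cDu: "compact Du" and ne: "Dl \<noteq> {}" "Du \<noteq> {}"
    using q unfolding quasidiff_unif_def wstar_convex_compact_def by auto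
  have eq: "dderiv f x w = Sup ((\<lambda>\<phi>. \<phi> w) ` Dl) + Inf ((\<lambda>\<psi>. \<psi> w) ` Du)"
    using q unfolding quasidiff_unif_def by auto
  have cA: "compact (fplus Dl ys)" by (rule compact_fplus[OF cDl])
  have cB: "compact (fplus (fneg Du) (\<lambda>x. - xs x))" by (rule compact_fplus[OF compact_fneg[OF cDu]])
  have "Inf ((\<lambda>\<psi>. \<psi> w) ` Du) \<le> ys w"
    by (rule cInf_lower) (use ys eval_bounded[OF cDu] in auto)
  moreover have "Sup ((\<lambda>\<phi>. \<phi> w) ` Dl) \<le> supp (fplus Dl ys) w - ys w"
  proof (rule cSup_least)
    show "(\<lambda>\<phi>. \<phi> w) ` Dl \<noteq> {}" using ne by auto
    fix r assume "r \<in> (\<lambda>\<phi>. \<phi> w) ` Dl"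
    then obtain \<phi> where "\<phi> \<in> Dl" "r = \<phi> w" by auto
    then have "(\<lambda>x. \<phi> x + ys x) \<in> fplus Dl ys" unfolding fplus_def by auto
    from supp_upper[OF cA this, of w] show "r \<le> supp (fplus Dl ys) w - ys w" using \<open>r = \<phi> w\<close> by auto
  qed
  ultimately show "dderiv f x w \<le> supp (fplus Dl ys) w" using eq by linarith
  have "xs w \<le> Sup ((\<lambda>\<phi>. \<phi> w) ` Dl)"
    by (rule cSup_upper) (use xs eval_bounded[OF cDl] in auto)
  moreover have "- supp (fplus (fneg Du) (\<lambda>x. - xs x)) w - xs w \<le> Inf ((\<lambda>\<psi>. \<psi> w) ` Du)"
  proof (rule cInf_greatest)
    show "(\<lambda>\<phi>. \<phi> w) ` Du \<noteq> {}" using ne by auto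
    fix r assume "r \<in> (\<lambda>\<phi>. \<phi> w) ` Du"
    then obtain \<psi> where "\<psi> \<in> Du" "r = \<psi> w" by auto
    then have "(\<lambda>x. (\<lambda>x. - \<psi> x) x + - xs x) \<in> fplus (fneg Du) (\<lambda>x. - xs x)" unfolding fplus_def fneg_def by auto
    from supp_upper[OF cB this, of w] show "- supp (fplus (fneg Du) (\<lambda>x. - xs x)) w - xs w \<le> r"
      using \<open>r = \<psi> w\<close> by auto
  qed
  ultimately show "- supp (fplus (fneg Du) (\<lambda>x. - xs x)) w \<le> dderiv f x w" using eq by linarith
qed

lemma cone_zero: "(\<lambda>x. 0) \<in> cone_fam F"
  unfolding cone_fam_def by (rule CollectI, rule exI[of _ "{}"]) auto

lemma cone_single: "c \<in> \<Union>F \<Longrightarrow> (s::real) \<ge> 0 \<Longrightarrow> (\<lambda>x. s * c x) \<in> cone_fam F"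
  unfolding cone_fam_def by (rule CollectI, rule exI[of _ "{c}"], rule exI[of _ "\<lambda>_. s"]) auto

lemma cone_scale:
  assumes "\<kappa> \<in> cone_fam F" "(s::real) \<ge> 0" shows "(\<lambda>x. s * \<kappa> x) \<in> cone_fam F"
proof -
  obtain S c where S: "finite S" "S \<subseteq> \<Union>F" "\<forall>\<psi>\<in>S. c \<psi> \<ge> 0" "\<kappa> = (\<lambda>x. \<Sum>\<psi>\<in>S. c \<psi> * \<psi> x)"
    using assms(1) unfolding cone_fam_def by blast
  show ?thesis unfolding cone_fam_def
    apply (rule CollectI, rule exI[of _ S], rule exI[of _ "\<lambda>\<psi>. s * c \<psi>"])
    using S assms(2) by (auto simp: sum_distrib_left mult.assoc)
qed

lemma cone_add:
  assumes "\<kappa>1 \<in> cone_fam F" "\<kappa>2 \<in> cone_fam F" shows "(\<lambda>x. \<kappa>1 x + \<kappa>2 x) \<in> cone_fam F"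
proof -
  obtain S1 c1 where S1: "finite S1" "S1 \<subseteq> \<Union>F" "\<forall>\<psi>\<in>S1. c1 \<psi> \<ge> 0" "\<kappa>1 = (\<lambda>x. \<Sum>\<psi>\<in>S1. c1 \<psi> * \<psi> x)"
    using assms(1) unfolding cone_fam_def by blast
  obtain S2 c2 where S2: "finite S2" "S2 \<subseteq> \<Union>F" "\<forall>\<psi>\<in>S2. c2 \<psi> \<ge> 0" "\<kappa>2 = (\<lambda>x. \<Sum>\<psi>\<in>S2. c2 \<psi> * \<psi> x)"
    using assms(2) unfolding cone_fam_def by blast
  define c where "c \<psi> = (if \<psi> \<in> S1 then c1 \<psi> else 0) + (if \<psi> \<in> S2 then c2 \<psi> else 0)" for \<psi>
  have "(\<Sum>\<psi>\<in>S1 \<union> S2. c \<psi> * \<psi> x) = \<kappa>1 x + \<kappa>2 x" for x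
  proof -
    have "(\<Sum>\<psi>\<in>S1 \<union> S2. c \<psi> * \<psi> x) = (\<Sum>\<psi>\<in>S1 \<union> S2. (if \<psi> \<in> S1 then c1 \<psi> * \<psi> x else 0))
          + (\<Sum>\<psi>\<in>S1 \<union> S2. (if \<psi> \<in> S2 then c2 \<psi> * \<psi> x else 0))"
    proof -
      have "c \<psi> * \<psi> x = (if \<psi> \<in> S1 then c1 \<psi> * \<psi> x else 0) + (if \<psi> \<in> S2 then c2 \<psi> * \<psi> x else 0)" for \<psi>
        unfolding c_def by (simp add: distrib_right)
      then show ?thesis by (simp add: sum.distrib)
    qed
    also have "(\<Sum>\<psi>\<in>S1 \<union> S2. (if \<psi> \<in> S1 then c1 \<psi> * \<psi> x else 0)) = (\<Sum>\<psi>\<in>S1. c1 \<psi> * \<psi> x)"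
      using S1(1) S2(1) by (simp add: sum.If_cases Int_absorb1)
    also have "(\<Sum>\<psi>\<in>S1 \<union> S2. (if \<psi> \<in> S2 then c2 \<psi> * \<psi> x else 0)) = (\<Sum>\<psi>\<in>S2. c2 \<psi> * \<psi> x)"
      using S1(1) S2(1) by (simp add: sum.If_cases Int_absorb1)
    finally show ?thesis using S1(4) S2(4) by simp
  qed
  moreover have "\<forall>\<psi>\<in>S1 \<union> S2. c \<psi> \<ge> 0" using S1(3) S2(3) unfolding c_def by auto
  ultimately show ?thesis unfolding cone_fam_def
    apply (intro CollectI exI[of _ "S1 \<union> S2"] exI[of _ c])
    using S1 S2 by auto
qed

lemma cone_conv: "fconv (cone_fam F)"
  unfolding fconv_def
proof (intro ballI allI impI)
  fix a b and t :: real assume "a \<in> cone_fam F" "b \<in> cone_fam F" "0 \<le> t \<and> t \<le> 1"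
  then show "(\<lambda>x. t * a x + (1 - t) * b x) \<in> cone_fam F"
    using cone_add cone_scale by (metis diff_ge_0_iff_ge)
qed

lemma open_fun_box:
  fixes U :: "('a \<Rightarrow> real) set"
  assumes "open U" "a \<in> U"
  shows "\<exists>P e. finite P \<and> e > 0 \<and> (\<forall>\<phi>. (\<forall>x\<in>P. \<bar>\<phi> x - a x\<bar> < e) \<longrightarrow> \<phi> \<in> U)"
proof -
  have "openin (product_topology (\<lambda>i. euclidean) UNIV) U" using assms(1) unfolding open_fun_def .
  then obtain V where V: "finite {i \<in> UNIV. V i \<noteq> topspace euclidean}" "\<forall>i\<in>UNIV. openin euclidean (V i)"
      "a \<in> Pi\<^sub>E UNIV V" "Pi\<^sub>E UNIV V \<subseteq> U"
    using assms(2) unfolding openin_product_topology_alt by blast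
  define P where "P = {i. V i \<noteq> UNIV}"
  have fP: "finite P" using V(1) unfolding P_def by simp
  have "\<forall>i\<in>P. \<exists>e>0. ball (a i) e \<subseteq> V i"
  proof
    fix i assume "i \<in> P"
    have "open (V i)" using V(2) by simp
    moreover have "a i \<in> V i" using V(3) by auto
    ultimately show "\<exists>e>0. ball (a i) e \<subseteq> V i" using open_contains_ball by blast
  qed
  then obtain ee where ee: "\<forall>i\<in>P. ee i > 0 \<and> ball (a i) (ee i) \<subseteq> V i" by metis
  define e where "e = (if P = {} then 1 else Min (ee ` P))"
  have epos: "e > 0" unfolding e_def using ee fP by auto
  have ele: "\<forall>i\<in>P. e \<le> ee i" unfolding e_def using fP by auto
  have "\<phi> \<in> U" if H: "\<forall>x\<in>P. \<bar>\<phi> x - a x\<bar> < e" for \<phi>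
  proof -
    have "\<phi> i \<in> V i" for i
    proof (cases "i \<in> P")
      case True
      then have "dist (a i) (\<phi> i) < ee i" using H ele by (force simp: dist_real_def abs_minus_commute)
      then show ?thesis using ee True by (meson mem_ball subsetD)
    next
      case False then show ?thesis unfolding P_def by auto
    qed
    then have "\<phi> \<in> Pi\<^sub>E UNIV V" by auto
    then show ?thesis using V(4) by auto
  qed
  then show ?thesis using fP epos by blast
qed

lemma finite_reduction:
  fixes A K :: "('a \<Rightarrow> real) set"
  assumes cA: "compact A" and dis: "A \<inter> closure K = {}"
  shows "\<exists>P e. finite P \<and> e > 0 \<and> (\<forall>a\<in>A. \<forall>\<kappa>\<in>K. \<exists>x\<in>P. e \<le> \<bar>a x - \<kappa> x\<bar>)"
proof -
  have "\<forall>a\<in>A. \<exists>P e. finite P \<and> e > 0 \<and> (\<forall>\<phi>. (\<forall>x\<in>P. \<bar>\<phi> x - a x\<bar> < e) \<longrightarrow> \<phi> \<in> - closure K)"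
    using dis by (intro ballI open_fun_box) auto
  then obtain PP ee where PE: "\<forall>a\<in>A. finite (PP a) \<and> ee a > 0 \<and>
       (\<forall>\<phi>. (\<forall>x\<in>PP a. \<bar>\<phi> x - a x\<bar> < ee a) \<longrightarrow> \<phi> \<in> - closure K)" by metis
  define Ob where "Ob a = {\<phi>. \<forall>x\<in>PP a. \<phi> (id x) \<in> ball (a x) (ee a / 2)}" for a
  have "open (Ob a)" if "a \<in> A" for a
    unfolding Ob_def using PE that by (intro product_topology_basis') auto
  moreover have "A \<subseteq> \<Union> (Ob ` A)"
    using PE unfolding Ob_def by force
  ultimately obtain T where T: "T \<subseteq> A" "finite T" "A \<subseteq> \<Union> (Ob ` T)"
    using compactE_image[OF cA] by metis
  define P where "P = \<Union> (PP ` T)"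
  define e where "e = (if T = {} then 1 else Min ((\<lambda>a. ee a / 2) ` T))"
  have fP: "finite P" unfolding P_def using T PE by auto
  have epos: "e > 0" unfolding e_def using T PE by auto
  have ele: "\<forall>a\<in>T. e \<le> ee a / 2"
  proof
    fix a assume "a \<in> T"
    then have "Min ((\<lambda>a. ee a / 2) ` T) \<le> ee a / 2" using T(2) by (intro Min_le) auto
    then show "e \<le> ee a / 2" unfolding e_def using \<open>a \<in> T\<close> by auto
  qed
  have "\<exists>x\<in>P. e \<le> \<bar>a x - \<kappa> x\<bar>" if a: "a \<in> A" and k: "\<kappa> \<in> K" for a \<kappa>
  proof (rule ccontr)
    assume "\<not> ?thesis"
    then have H: "\<forall>x\<in>P. \<bar>a x - \<kappa> x\<bar> < e" by auto
    obtain a0 where a0: "a0 \<in> T" "a \<in> Ob a0" using T a by auto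
    have "\<forall>x\<in>PP a0. \<bar>\<kappa> x - a0 x\<bar> < ee a0"
    proof
      fix x assume x: "x \<in> PP a0"
      then have "x \<in> P" using a0 unfolding P_def by auto
      then have "\<bar>a x - \<kappa> x\<bar> < ee a0 / 2" using H ele a0 by force
      moreover have "\<bar>a x - a0 x\<bar> < ee a0 / 2" using a0 x unfolding Ob_def by (auto simp: dist_real_def abs_minus_commute)
      ultimately show "\<bar>\<kappa> x - a0 x\<bar> < ee a0" by linarith
    qed
    then have "\<kappa> \<in> - closure K" using PE a0 T by blast
    then show False using k closure_subset by auto
  qed
  then show ?thesis using fP epos by blast
qed

lemma quad_nonneg:
  fixes S Q :: real
  assumes H: "\<forall>t. 0 < t \<and> t \<le> 1 \<longrightarrow> 0 \<le> 2 * S + t * Q" and Q: "Q \<ge> 0"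
  shows "S \<ge> 0"
proof (rule ccontr)
  assume "\<not> S \<ge> 0" then have S: "S < 0" by simp
  define t where "t = min 1 (- S / (Q + 1))"
  have t0: "0 < t" "t \<le> 1" unfolding t_def using S Q by (auto simp: divide_neg_pos)
  have "t * Q \<le> (- S / (Q + 1)) * Q" unfolding t_def using Q by (intro mult_right_mono) auto
  also have "\<dots> = - S * (Q / (Q + 1))" by simp
  also have "\<dots> \<le> - S * 1" using S Q by (intro mult_left_mono) auto
  finally have "2 * S + t * Q < 0" using S by linarith
  then show False using H t0 by force
qed

lemma minnorm:
  fixes D :: "('a \<Rightarrow> real) set" and P :: "'a set"
  assumes fP: "finite P" and ne: "D \<noteq> {}" and conv: "fconv D" and e: "e > 0"
    and lb: "\<forall>y\<in>D. e \<le> (\<Sum>x\<in>P. (y x)\<^sup>2)"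
  shows "\<exists>z. \<forall>y\<in>D. e \<le> (\<Sum>x\<in>P. z x * y x)"
proof -
  define N where "N y = (\<Sum>x\<in>P. (y x)\<^sup>2)" for y :: "'a \<Rightarrow> real"
  have N0: "0 \<le> N y" for y unfolding N_def by (intro sum_nonneg) auto
  define d where "d = Inf (N ` D)"
  have bdd: "bdd_below (N ` D)" using N0 by (intro bdd_belowI[of _ 0]) auto
  have de: "e \<le> d" unfolding d_def using lb ne by (intro cInf_greatest) (auto simp: N_def)
  have dle: "d \<le> N y" if "y \<in> D" for y unfolding d_def using bdd that by (intro cInf_lower) auto
  have "\<exists>y\<in>D. N y < d + inverse (real (Suc n))" for n
  proof -
    have "Inf (N ` D) < d + inverse (real (Suc n))" unfolding d_def by simp
    then show ?thesis using cInf_less_iff[OF _ bdd] ne by auto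
  qed
  then obtain Y where Y: "\<And>n. Y n \<in> D" "\<And>n. N (Y n) < d + inverse (real (Suc n))" by metis
  have convD: "\<And>a b t. a \<in> D \<Longrightarrow> b \<in> D \<Longrightarrow> 0 \<le> t \<Longrightarrow> t \<le> 1 \<Longrightarrow> (\<lambda>x. t * a x + (1 - t) * b x) \<in> D"
    using conv unfolding fconv_def by blast
  have par: "N (\<lambda>x. Y n x - Y k x) \<le> 2 * inverse (real (Suc n)) + 2 * inverse (real (Suc k))" for n k
  proof -
    define mid where "mid = (\<lambda>x. (1/2) * Y n x + (1 - 1/2) * Y k x)"
    have "mid \<in> D" unfolding mid_def using Y(1) by (intro convD) auto
    then have dm: "d \<le> N mid" by (rule dle)
    have "N (\<lambda>x. Y n x - Y k x) = 2 * N (Y n) + 2 * N (Y k) - 4 * N mid"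
    proof -
      have "(Y n x - Y k x)\<^sup>2 = 2 * (Y n x)\<^sup>2 + 2 * (Y k x)\<^sup>2 - 4 * (mid x)\<^sup>2" for x
        unfolding mid_def by (simp add: power2_eq_square algebra_simps)
      then show ?thesis unfolding N_def by (simp add: sum.distrib sum_subtractf sum_distrib_left)
    qed
    then show ?thesis using Y(2)[of n] Y(2)[of k] dm by linarith
  qed
  have coord: "(Y n x - Y k x)\<^sup>2 \<le> 2 * inverse (real (Suc n)) + 2 * inverse (real (Suc k))" if "x \<in> P" for n k x
  proof -
    have "(Y n x - Y k x)\<^sup>2 \<le> N (\<lambda>x. Y n x - Y k x)" unfolding N_def
      using fP that by (intro member_le_sum) auto
    then show ?thesis using par[of n k] by linarith
  qed
  have conv_x: "convergent (\<lambda>n. Y n x)" if "x \<in> P" for x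
  proof -
    have "Cauchy (\<lambda>n. Y n x)"
    proof (rule metric_CauchyI)
      fix \<epsilon> :: real assume "\<epsilon> > 0"
      then have "\<epsilon>\<^sup>2 / 4 > 0" by simp
      then obtain M where M: "inverse (real (Suc M)) < \<epsilon>\<^sup>2 / 4" using reals_Archimedean by blast
      have "dist (Y n x) (Y k x) < \<epsilon>" if "n \<ge> M" "k \<ge> M" for n k
      proof -
        have i1: "inverse (real (Suc n)) \<le> inverse (real (Suc M))" using that by (simp add: le_imp_inverse_le)
        have i2: "inverse (real (Suc k)) \<le> inverse (real (Suc M))" using that by (simp add: le_imp_inverse_le)
        have "(Y n x - Y k x)\<^sup>2 < \<epsilon>\<^sup>2" using coord[OF \<open>x \<in> P\<close>, of n k] i1 i2 M by linarith
        then have "\<bar>Y n x - Y k x\<bar> < \<epsilon>" using \<open>\<epsilon> > 0\<close>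
          using power_less_imp_less_base[of "\<bar>Y n x - Y k x\<bar>" 2 \<epsilon>] by simp
        then show ?thesis by (simp add: dist_real_def)
      qed
      then show "\<exists>M. \<forall>m\<ge>M. \<forall>n\<ge>M. dist (Y m x) (Y n x) < \<epsilon>" by blast
    qed
    then show ?thesis by (simp add: Cauchy_convergent_iff)
  qed
  define z where "z x = lim (\<lambda>n. Y n x)" for x
  have Yz: "(\<lambda>n. Y n x) \<longlonglongrightarrow> z x" if "x \<in> P" for x
    unfolding z_def using conv_x[OF that] by (simp add: convergent_LIMSEQ_iff)
  have NYz: "(\<lambda>n. N (Y n)) \<longlonglongrightarrow> N z" unfolding N_def
    by (intro tendsto_sum tendsto_power Yz)
  have NYd: "(\<lambda>n. N (Y n)) \<longlonglongrightarrow> d"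
  proof (rule tendsto_sandwich[of "\<lambda>n. d" _ _ "\<lambda>n. d + inverse (real (Suc n))"])
    show "\<forall>\<^sub>F n in sequentially. d \<le> N (Y n)" by (intro always_eventually allI dle Y(1))
    show "\<forall>\<^sub>F n in sequentially. N (Y n) \<le> d + inverse (real (Suc n))" using Y(2) by (intro always_eventually allI less_imp_le) 
    show "(\<lambda>n. d) \<longlonglongrightarrow> d" by simp
    show "(\<lambda>n. d + inverse (real (Suc n))) \<longlonglongrightarrow> d"
      using tendsto_add[OF tendsto_const LIMSEQ_inverse_real_of_nat, of d] by simp
  qed
  have Nz: "N z = d" using LIMSEQ_unique[OF NYz NYd] .
  have "e \<le> (\<Sum>x\<in>P. z x * y x)" if y: "y \<in> D" for y
  proof -
    define S where "S = (\<Sum>x\<in>P. z x * (y x - z x))"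
    define Q where "Q = N (\<lambda>x. y x - z x)"
    have "0 \<le> 2 * S + t * Q" if t: "0 < t" "t \<le> 1" for t
    proof -
      have "d \<le> N (\<lambda>x. t * y x + (1 - t) * z x)"
      proof (rule LIMSEQ_le_const)
        show "(\<lambda>n. N (\<lambda>x. t * y x + (1 - t) * Y n x)) \<longlonglongrightarrow> N (\<lambda>x. t * y x + (1 - t) * z x)"
          unfolding N_def by (intro tendsto_sum tendsto_power tendsto_add tendsto_mult tendsto_const Yz)
        show "\<exists>M. \<forall>n\<ge>M. d \<le> N (\<lambda>x. t * y x + (1 - t) * Y n x)"
          using dle convD[OF y Y(1)] t by auto
      qed
      also have "N (\<lambda>x. t * y x + (1 - t) * z x) = N z + t * (2 * S + t * Q)"
      proof -
        have pw: "(t * y x + (1 - t) * z x)\<^sup>2 = (z x)\<^sup>2 + t * (2 * (z x * (y x - z x)) + t * (y x - z x)\<^sup>2)" for x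
          by (simp add: power2_eq_square algebra_simps)
        have "N (\<lambda>x. t * y x + (1 - t) * z x) = (\<Sum>x\<in>P. (z x)\<^sup>2 + t * (2 * (z x * (y x - z x)) + t * (y x - z x)\<^sup>2))"
          unfolding N_def by (rule sum.cong) (simp_all only: pw)
        also have "\<dots> = N z + t * (2 * S + t * Q)" unfolding N_def S_def Q_def
          by (simp add: sum.distrib sum_distrib_left distrib_left)
        finally show ?thesis .
      qed
      finally have "0 \<le> t * (2 * S + t * Q)" using Nz by simp
      then show ?thesis using t by (simp add: zero_le_mult_iff)
    qed
    then have "S \<ge> 0" using quad_nonneg[of S Q] N0[of "\<lambda>x. y x - z x"] unfolding Q_def by blast
    moreover have "(\<Sum>x\<in>P. z x * y x) = S + N z"
      unfolding S_def N_def by (simp add: power2_eq_square algebra_simps sum.distrib[symmetric])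
    ultimately show ?thesis using Nz de by linarith
  qed
  then show ?thesis by blast
qed

lemma linear_eval_comb:
  assumes "linear a" "finite P"
  shows "a ((- (1 / e)) *\<^sub>R (\<Sum>x\<in>P. z x *\<^sub>R x)) = - (1 / e) * (\<Sum>x\<in>P. z x * a x)"
proof -
  have sc: "a (c *\<^sub>R v) = c * a v" for c v using real_vector.linear_scale[OF assms(1)] by simp
  have s: "a (\<Sum>x\<in>P. z x *\<^sub>R x) = (\<Sum>x\<in>P. z x * a x)"
    using real_vector.linear_sum[OF assms(1), of "\<lambda>x. z x *\<^sub>R x" P] sc by simp
  show ?thesis unfolding sc s ..
qed

lemma separation:
  fixes A :: "('a::real_vector \<Rightarrow> real) set" and F :: "('a \<Rightarrow> real) set set"
  assumes cA: "compact A" and neA: "A \<noteq> {}" and cvA: "fconv A" and linA: "\<forall>a\<in>A. linear a"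
    and linF: "\<forall>c\<in>\<Union>F. linear c"
    and dis: "A \<inter> closure (cone_fam F) = {}"
  shows "\<exists>p. (\<forall>a\<in>A. a p \<le> -1) \<and> (\<forall>c\<in>\<Union>F. 0 \<le> c p)"
proof -
  define K where "K = cone_fam F"
  obtain P \<epsilon> where P: "finite P" "\<epsilon> > 0" "\<forall>a\<in>A. \<forall>\<kappa>\<in>K. \<exists>x\<in>P. \<epsilon> \<le> \<bar>a x - \<kappa> x\<bar>"
    using finite_reduction[OF cA dis[folded K_def]] by blast
  define D where "D = {y. \<exists>a\<in>A. \<exists>\<kappa>\<in>K. y = (\<lambda>x. a x - \<kappa> x)}"
  have memD: "\<And>a \<kappa>. a \<in> A \<Longrightarrow> \<kappa> \<in> K \<Longrightarrow> (\<lambda>x. a x - \<kappa> x) \<in> D" unfolding D_def by blast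
  obtain a0 where a0: "a0 \<in> A" using neA by auto
  have K0: "(\<lambda>x. 0) \<in> K" unfolding K_def by (rule cone_zero)
  have neD: "D \<noteq> {}" unfolding D_def using a0 K0 by force
  have cvK: "fconv K" unfolding K_def by (rule cone_conv)
  have cvD: "fconv D" unfolding fconv_def
  proof (intro ballI allI impI)
    fix y1 y2 and t :: real assume y1: "y1 \<in> D" and y2: "y2 \<in> D" and t: "0 \<le> t \<and> t \<le> 1"
    obtain a1 \<kappa>1 where 1: "a1 \<in> A" "\<kappa>1 \<in> K" "y1 = (\<lambda>x. a1 x - \<kappa>1 x)" using y1 unfolding D_def by blast
    obtain a2 \<kappa>2 where 2: "a2 \<in> A" "\<kappa>2 \<in> K" "y2 = (\<lambda>x. a2 x - \<kappa>2 x)" using y2 unfolding D_def by blast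
    have i1: "(\<lambda>x. t * a1 x + (1 - t) * a2 x) \<in> A" using cvA 1 2 t unfolding fconv_def by blast
    have i2: "(\<lambda>x. t * \<kappa>1 x + (1 - t) * \<kappa>2 x) \<in> K" using cvK 1 2 t unfolding fconv_def by blast
    have eq: "(\<lambda>x. t * y1 x + (1 - t) * y2 x) =
        (\<lambda>x. (\<lambda>x. t * a1 x + (1 - t) * a2 x) x - (\<lambda>x. t * \<kappa>1 x + (1 - t) * \<kappa>2 x) x)"
      using 1 2 by (auto simp: algebra_simps)
    show "(\<lambda>x. t * y1 x + (1 - t) * y2 x) \<in> D" unfolding eq by (rule memD[OF i1 i2])
  qed
  have lb: "\<forall>y\<in>D. \<epsilon>\<^sup>2 \<le> (\<Sum>x\<in>P. (y x)\<^sup>2)"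
  proof
    fix y assume "y \<in> D"
    then obtain a \<kappa> where ak: "a \<in> A" "\<kappa> \<in> K" "y = (\<lambda>x. a x - \<kappa> x)" unfolding D_def by blast
    then obtain x where x: "x \<in> P" "\<epsilon> \<le> \<bar>a x - \<kappa> x\<bar>" using P(3) by blast
    have "\<epsilon>\<^sup>2 \<le> (\<bar>a x - \<kappa> x\<bar>)\<^sup>2" using x P(2) by (intro power_mono) auto
    also have "\<dots> = (y x)\<^sup>2" using ak by simp
    also have "\<dots> \<le> (\<Sum>x\<in>P. (y x)\<^sup>2)" using P(1) x(1) by (intro member_le_sum) auto
    finally show "\<epsilon>\<^sup>2 \<le> (\<Sum>x\<in>P. (y x)\<^sup>2)" .
  qed
  obtain z where z: "\<forall>y\<in>D. \<epsilon>\<^sup>2 \<le> (\<Sum>x\<in>P. z x * y x)"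
    using minnorm[OF P(1) neD cvD _ lb] P(2) by auto
  have zA: "\<epsilon>\<^sup>2 \<le> (\<Sum>x\<in>P. z x * a x)" if "a \<in> A" for a
  proof -
    have "(\<lambda>x. a x - 0) \<in> D" using memD[OF that K0] by simp
    then show ?thesis using z by fastforce
  qed
  have zF: "(\<Sum>x\<in>P. z x * c x) \<le> 0" if c: "c \<in> \<Union>F" for c
  proof (rule ccontr)
    assume "\<not> ?thesis"
    then have pos: "(\<Sum>x\<in>P. z x * c x) > 0" by simp
    define s where "s = \<bar>\<Sum>x\<in>P. z x * a0 x\<bar> / (\<Sum>x\<in>P. z x * c x)"
    have s0: "s \<ge> 0" unfolding s_def using pos by auto
    have "(\<lambda>x. s * c x) \<in> K" unfolding K_def using c s0 by (rule cone_single)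
    then have "(\<lambda>x. a0 x - s * c x) \<in> D" using memD[OF a0] by simp
    then have "\<epsilon>\<^sup>2 \<le> (\<Sum>x\<in>P. z x * (a0 x - s * c x))" using z by fastforce
    also have "\<dots> = (\<Sum>x\<in>P. z x * a0 x) - s * (\<Sum>x\<in>P. z x * c x)"
      by (simp add: algebra_simps sum_subtractf sum_distrib_left)
    also have "s * (\<Sum>x\<in>P. z x * c x) = \<bar>\<Sum>x\<in>P. z x * a0 x\<bar>" unfolding s_def using pos by simp
    finally have "\<epsilon>\<^sup>2 \<le> 0" by linarith
    then show False using P(2) by (simp add: power2_eq_square mult_le_0_iff) 
  qed
  define p where "p = (- (1 / \<epsilon>\<^sup>2)) *\<^sub>R (\<Sum>x\<in>P. z x *\<^sub>R x)"
  have "a p \<le> -1" if "a \<in> A" for a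
  proof -
    have "a p = - (1 / \<epsilon>\<^sup>2) * (\<Sum>x\<in>P. z x * a x)" unfolding p_def
      using linA that P(1) by (intro linear_eval_comb) auto
    also have "\<dots> \<le> - (1 / \<epsilon>\<^sup>2) * \<epsilon>\<^sup>2" using zA[OF that] P(2) by (intro mult_left_mono_neg) auto
    also have "\<dots> = -1" using P(2) by simp
    finally show ?thesis .
  qed
  moreover have "0 \<le> c p" if "c \<in> \<Union>F" for c
  proof -
    have "c p = - (1 / \<epsilon>\<^sup>2) * (\<Sum>x\<in>P. z x * c x)" unfolding p_def
      using linF that P(1) by (intro linear_eval_comb) auto
    also have "\<dots> \<ge> 0" using zF[OF that] P(2) by (simp add: divide_nonpos_pos)
    finally show ?thesis .
  qed
  ultimately show ?thesis by blast
qed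

lemma homotopic_canon_I:
  fixes h :: "real \<times> 'a::topological_space \<Rightarrow> 'b::topological_space"
  assumes "continuous_on ({0..1} \<times> S) h" "\<forall>p\<in>{0..1} \<times> S. h p \<in> T"
    "\<forall>x\<in>S. h (0, x) = f x" "\<forall>x\<in>S. h (1, x) = g x"
  shows "homotopic_with_canon (\<lambda>_. True) S T f g"
  by (subst homotopic_with) (use assms in \<open>auto intro!: exI[of _ h]\<close>)

definition ballm :: "nat \<Rightarrow> (nat \<Rightarrow> real) set" where
  "ballm m = {t. (\<forall>i\<ge>m. t i = 0) \<and> (\<Sum>i<m. (t i)\<^sup>2) \<le> 1}"

definition spherem :: "nat \<Rightarrow> (nat \<Rightarrow> real) set" where
  "spherem m = {t. (\<forall>i\<ge>m. t i = 0) \<and> (\<Sum>i<m. (t i)\<^sup>2) = 1}"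

lemma not_contractible_spherem:
  assumes "m \<ge> 1" shows "\<not> contractible (spherem m)"
proof -
  have "{..m-1} = {..<m}" using assms by auto
  moreover have "(\<forall>i>m-1. x i = 0) \<longleftrightarrow> (\<forall>i\<ge>m. x i = 0)" for x :: "nat \<Rightarrow> real" using assms
    by (metis Suc_le_eq Suc_pred' le_less_trans less_one not_less)
  ultimately have "nsphere (m-1) = top_of_set (spherem m)"
    unfolding nsphere spherem_def euclidean_product_topology by (simp add: conj_commute)
  then show ?thesis using non_contractible_space_nsphere[of "m-1"] by simp
qed

definition nnm :: "nat \<Rightarrow> (nat \<Rightarrow> real) \<Rightarrow> real" where
  "nnm m y = sqrt (\<Sum>i<m. (y i)\<^sup>2)"

definition nzm :: "nat \<Rightarrow> (nat \<Rightarrow> real) \<Rightarrow> (nat \<Rightarrow> real)" where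
  "nzm m y = (\<lambda>i. if i < m then y i / nnm m y else 0)"

lemma nnm_pos: "i < m \<Longrightarrow> y i \<noteq> 0 \<Longrightarrow> nnm m y > 0"
proof -
  assume "i < m" "y i \<noteq> 0"
  then have "0 < (y i)\<^sup>2" by simp
  also have "(y i)\<^sup>2 \<le> (\<Sum>i<m. (y i)\<^sup>2)" using \<open>i < m\<close> by (intro member_le_sum) auto
  finally show ?thesis unfolding nnm_def by simp
qed

lemma nzm_sphere: "nnm m y > 0 \<Longrightarrow> nzm m y \<in> spherem m"
proof -
  assume p: "nnm m y > 0"
  have s: "(nnm m y)\<^sup>2 = (\<Sum>i<m. (y i)\<^sup>2)" unfolding nnm_def by (simp add: sum_nonneg)
  have "(\<Sum>i<m. (nzm m y i)\<^sup>2) = (\<Sum>i<m. (y i)\<^sup>2 / (nnm m y)\<^sup>2)"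
    unfolding nzm_def by (simp add: power_divide)
  also have "\<dots> = (\<Sum>i<m. (y i)\<^sup>2) / (nnm m y)\<^sup>2" by (simp add: sum_divide_distrib)
  also have "\<dots> = 1"
  proof -
    have "(nnm m y)\<^sup>2 \<noteq> 0" using p by simp
    then show ?thesis by (simp add: s[symmetric])
  qed
  finally show ?thesis unfolding spherem_def nzm_def by auto
qed

lemma nzm_id: "x \<in> spherem m \<Longrightarrow> nzm m x = x"
  unfolding spherem_def nzm_def nnm_def by auto

lemma continuous_nzm:
  assumes "\<And>i. i < m \<Longrightarrow> continuous_on T (\<lambda>p. y p i)" "\<forall>p\<in>T. nnm m (y p) > 0"
  shows "continuous_on T (\<lambda>p. nzm m (y p))"
proof (rule continuous_on_coordinatewise_then_product)
  fix i
  show "continuous_on T (\<lambda>p. nzm m (y p) i)"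
  proof (cases "i < m")
    case True
    have "continuous_on T (\<lambda>p. nnm m (y p))" unfolding nnm_def
      by (intro continuous_intros assms(1)) auto
    then have "continuous_on T (\<lambda>p. y p i / nnm m (y p))"
      using assms True by (intro continuous_on_divide) auto
    then show ?thesis unfolding nzm_def using True by simp
  next
    case False then show ?thesis unfolding nzm_def by simp
  qed
qed

lemma spherem_sub: "spherem m \<subseteq> ballm m"
  unfolding spherem_def ballm_def by auto

lemma zero_thm:
  fixes g :: "(nat \<Rightarrow> real) \<Rightarrow> nat \<Rightarrow> real" and m :: nat
  assumes m: "m \<ge> 1"
    and cont: "\<forall>i<m. continuous_on (ballm m) (\<lambda>t. g t i)"
    and bd: "\<forall>t\<in>spherem m. (\<Sum>i<m. t i * g t i) > 0"
  shows "\<exists>t\<in>ballm m. \<forall>i<m. g t i = 0"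
proof (rule ccontr)
  assume "\<not> ?thesis"
  then have nz: "\<forall>t\<in>ballm m. \<exists>i<m. g t i \<noteq> 0" by auto
  then have nnpos: "nnm m (g t) > 0" if "t \<in> ballm m" for t
    using that nnm_pos by blast
  define S where "S = spherem m"
  have cproj: "continuous_on T (\<lambda>p. snd p i)" for T :: "(real \<times> (nat \<Rightarrow> real)) set" and i
    by (intro continuous_on_compose2[OF continuous_on_product_coordinates continuous_on_snd]) auto
  have cg: "continuous_on T (\<lambda>p. g (k p) i)" if "i < m" "continuous_on T k" "k ` T \<subseteq> ballm m" for T :: "(real \<times> (nat \<Rightarrow> real)) set" and k i
    using continuous_on_compose2[OF cont[rule_format, OF that(1)] that(2) that(3)] .
  define h1 where "h1 p = nzm m (\<lambda>i. (1 - fst p) * snd p i + fst p * g (snd p) i)" for p :: "real \<times> (nat \<Rightarrow> real)"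
  have pos1: "nnm m (\<lambda>i. (1 - fst p) * snd p i + fst p * g (snd p) i) > 0" if p: "p \<in> {0..1} \<times> S" for p
  proof -
    obtain s x where sx: "p = (s, x)" "s \<in> {0..1}" "x \<in> S" using p by auto
    have "(\<Sum>i<m. x i * ((1 - s) * x i + s * g x i)) = (\<Sum>i<m. (1 - s) * (x i)\<^sup>2 + s * (x i * g x i))"
      by (rule sum.cong) (auto simp: algebra_simps power2_eq_square)
    also have "\<dots> = (1 - s) * (\<Sum>i<m. (x i)\<^sup>2) + s * (\<Sum>i<m. x i * g x i)"
      by (simp add: sum.distrib sum_distrib_left)
    also have "\<dots> = (1 - s) + s * (\<Sum>i<m. x i * g x i)" using sx unfolding S_def spherem_def by simp
    also have "\<dots> > 0"
    proof -
      have "(\<Sum>i<m. x i * g x i) > 0" using bd sx unfolding S_def by auto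
      then show ?thesis using sx(2)
        by (cases "s = 0") (auto intro: add_nonneg_pos add_pos_nonneg)
    qed
    finally have "\<exists>i<m. (1 - s) * x i + s * g x i \<noteq> 0"
      by (metis (no_types, lifting) lessThan_iff mult_zero_right sum.neutral order.irrefl)
    then show ?thesis using sx nnm_pos by auto
  qed
  have H1: "homotopic_with_canon (\<lambda>_. True) S S id (\<lambda>x. nzm m (g x))"
  proof (rule homotopic_canon_I[where h=h1])
    show "continuous_on ({0..1} \<times> S) h1" unfolding h1_def
    proof (rule continuous_nzm)
      fix i assume i: "i < m"
      show "continuous_on ({0..1} \<times> S) (\<lambda>p. (1 - fst p) * snd p i + fst p * g (snd p) i)"
        by (intro continuous_intros cproj cg[OF i]) (auto simp: S_def spherem_sub[THEN subsetD])
    qed (use pos1 in auto)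
    show "\<forall>p\<in>{0..1} \<times> S. h1 p \<in> S" unfolding h1_def S_def using pos1 nzm_sphere by (auto simp: S_def)
    show "\<forall>x\<in>S. h1 (0, x) = id x" unfolding h1_def S_def using nzm_id by auto
    show "\<forall>x\<in>S. h1 (1, x) = nzm m (g x)" unfolding h1_def by auto
  qed
  define h2 where "h2 p = nzm m (\<lambda>i. g (\<lambda>j. fst p * snd p j) i)" for p :: "real \<times> (nat \<Rightarrow> real)"
  have inB: "(\<lambda>j. fst p * snd p j) \<in> ballm m" if p: "p \<in> {0..1} \<times> S" for p
  proof -
    obtain s x where sx: "p = (s, x)" "s \<in> {0..1}" "x \<in> S" using p by auto
    have "(\<Sum>i<m. (s * x i)\<^sup>2) = s\<^sup>2 * (\<Sum>i<m. (x i)\<^sup>2)" by (simp add: power_mult_distrib sum_distrib_left)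
    also have "\<dots> = s\<^sup>2" using sx unfolding S_def spherem_def by simp
    also have "\<dots> \<le> 1" using sx(2) by (simp add: abs_le_iff power_le_one)
    finally show ?thesis using sx unfolding ballm_def S_def spherem_def by auto
  qed
  have H2: "homotopic_with_canon (\<lambda>_. True) S S (\<lambda>x. nzm m (g (\<lambda>j. 0))) (\<lambda>x. nzm m (g x))"
  proof (rule homotopic_canon_I[where h=h2])
    show "continuous_on ({0..1} \<times> S) h2" unfolding h2_def
    proof (rule continuous_nzm)
      fix i assume i: "i < m"
      show "continuous_on ({0..1} \<times> S) (\<lambda>p. g (\<lambda>j. fst p * snd p j) i)"
        by (intro cg[OF i] continuous_on_coordinatewise_then_product continuous_intros cproj)
          (use inB in auto)
    next
      show "\<forall>p\<in>{0..1} \<times> S. 0 < nnm m (g (\<lambda>j. fst p * snd p j))" using inB nnpos by auto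
    qed
    show "\<forall>p\<in>{0..1} \<times> S. h2 p \<in> S" unfolding h2_def S_def using inB nnpos nzm_sphere by (auto simp: S_def)
    show "\<forall>x\<in>S. h2 (0, x) = nzm m (g (\<lambda>j. 0))" unfolding h2_def by auto
    show "\<forall>x\<in>S. h2 (1, x) = nzm m (g x)" unfolding h2_def by auto
  qed
  have "homotopic_with_canon (\<lambda>_. True) S S id (\<lambda>x. nzm m (g (\<lambda>j. 0)))"
    using homotopic_with_trans[OF H1 homotopic_with_symD[OF H2]] .
  then have "contractible S" unfolding contractible_def by blast
  then show False using not_contractible_spherem[OF m] unfolding S_def by simp
qed

lemma compact_ballm: "compact (ballm m)"
proof -
  define Bx where "Bx = Pi\<^sub>E UNIV (\<lambda>i. if i < m then {-1..1::real} else {0})"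
  have "compactin (product_topology (\<lambda>i. euclidean) UNIV) Bx"
    unfolding Bx_def compactin_PiE by (auto simp: compactin_euclidean_iff)
  then have cB: "compact Bx" by (simp add: euclidean_product_topology compactin_euclidean_iff)
  have c1: "closed {t :: nat \<Rightarrow> real. \<forall>i\<ge>m. t i = 0}"
  proof -
    have "{t :: nat \<Rightarrow> real. \<forall>i\<ge>m. t i = 0} = (\<Inter>i\<in>{m..}. {t. t i = 0})" by auto
    moreover have "closed {t :: nat \<Rightarrow> real. t i = 0}" for i
      by (rule closed_Collect_eq) (auto intro: continuous_on_product_coordinates)
    ultimately show ?thesis by (auto intro: closed_INT)
  qed
  have c2: "closed {t :: nat \<Rightarrow> real. (\<Sum>i<m. (t i)\<^sup>2) \<le> 1}"
    by (rule closed_Collect_le) (auto intro!: continuous_intros continuous_on_product_coordinates)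
  have cl: "closed (ballm m)"
  proof -
    have "ballm m = {t :: nat \<Rightarrow> real. \<forall>i\<ge>m. t i = 0} \<inter> {t. (\<Sum>i<m. (t i)\<^sup>2) \<le> 1}"
      unfolding ballm_def by auto
    then show ?thesis using c1 c2 by auto
  qed
  have sub: "ballm m \<subseteq> Bx"
  proof
    fix t assume t: "t \<in> ballm m"
    have "t i \<in> (if i < m then {-1..1} else {0})" for i
    proof (cases "i < m")
      case True
      have "(t i)\<^sup>2 \<le> (\<Sum>i<m. (t i)\<^sup>2)" using True by (intro member_le_sum) auto
      also have "\<dots> \<le> 1" using t unfolding ballm_def by auto
      finally have "\<bar>t i\<bar> \<le> 1" by (simp add: abs_square_le_1)
      then show ?thesis using True by auto
    next
      case False then show ?thesis using t unfolding ballm_def by auto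
    qed
    then show "t \<in> Bx" unfolding Bx_def by auto
  qed
  have "ballm m = Bx \<inter> ballm m" using sub by auto
  then show ?thesis using compact_Int_closed[OF cB cl] by simp
qed

lemma ballm_abs: "t \<in> ballm m \<Longrightarrow> \<bar>t i\<bar> \<le> 1"
proof (cases "i < m")
  case True
  assume t: "t \<in> ballm m"
  have "(t i)\<^sup>2 \<le> (\<Sum>i<m. (t i)\<^sup>2)" using True by (intro member_le_sum) auto
  also have "\<dots> \<le> 1" using t unfolding ballm_def by auto
  finally show "\<bar>t i\<bar> \<le> 1" by (simp add: abs_square_le_1)
next
  case False
  assume t: "t \<in> ballm m"
  then show ?thesis using False unfolding ballm_def by auto
qed

lemma dderiv_tendsto:
  assumes "dir_diff f x"
  shows "((\<lambda>\<alpha>. (f (x + \<alpha> *\<^sub>R v) - f x) / \<alpha>) \<longlongrightarrow> dderiv f x v) (at_right 0)"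
proof -
  obtain L where L: "((\<lambda>\<alpha>. (f (x + \<alpha> *\<^sub>R v) - f x) / \<alpha>) \<longlongrightarrow> L) (at_right 0)"
    using assms unfolding dir_diff_def by blast
  have "dderiv f x v = L" unfolding dderiv_def using L by (rule tendsto_Lim[OF trivial_limit_at_right_real])
  then show ?thesis using L by simp
qed

lemma unif_approx:
  fixes f :: "'a::real_normed_vector \<Rightarrow> real"
  assumes du: "dir_diff_unif f x" and cV: "compact V" and fW: "finite W"
    and sp: "\<forall>v1\<in>V. \<forall>v2\<in>V. v1 - v2 \<in> span W" and e: "\<epsilon> > 0"
  shows "\<forall>\<^sub>F \<alpha> in at_right 0. \<forall>v\<in>V. \<bar>(f (x + \<alpha> *\<^sub>R v) - f x) / \<alpha> - dderiv f x v\<bar> < \<epsilon>"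
proof -
  define Q where "Q \<alpha> v = (f (x + \<alpha> *\<^sub>R v) - f x) / \<alpha>" for \<alpha> v
  have dd: "dir_diff f x" using du unfolding dir_diff_unif_def by auto
  have "\<forall>v0\<in>V. \<exists>\<delta>>0. \<forall>\<alpha> v'. 0 < \<alpha> \<and> \<alpha> < \<delta> \<and> v' - v0 \<in> span W \<and> norm (v' - v0) < \<delta> \<longrightarrow>
            \<bar>Q \<alpha> v' - dderiv f x v0\<bar> < \<epsilon> / 2"
  proof
    fix v0 assume "v0 \<in> V"
    have H: "\<forall>v B \<epsilon>. finite B \<and> \<epsilon> > 0 \<longrightarrow>
        (\<exists>\<delta>>0. \<forall>\<alpha> v'. 0 < \<alpha> \<and> \<alpha> < \<delta> \<and> v' - v \<in> span B \<and> norm (v' - v) < \<delta> \<longrightarrow>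
            \<bar>(f (x + \<alpha> *\<^sub>R v') - f x) / \<alpha> - dderiv f x v\<bar> < \<epsilon>)"
      using du unfolding dir_diff_unif_def by (rule conjunct2)
    have "\<epsilon> / 2 > 0" using e by simp
    from H[rule_format, OF conjI[OF fW this], of v0]
    show "\<exists>\<delta>>0. \<forall>\<alpha> v'. 0 < \<alpha> \<and> \<alpha> < \<delta> \<and> v' - v0 \<in> span W \<and> norm (v' - v0) < \<delta> \<longrightarrow>
            \<bar>Q \<alpha> v' - dderiv f x v0\<bar> < \<epsilon> / 2" unfolding Q_def .
  qed
  then obtain \<delta> where \<delta>: "\<forall>v0\<in>V. \<delta> v0 > 0 \<and> (\<forall>\<alpha> v'. 0 < \<alpha> \<and> \<alpha> < \<delta> v0 \<and> v' - v0 \<in> span W \<and> norm (v' - v0) < \<delta> v0 \<longrightarrow>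
            \<bar>Q \<alpha> v' - dderiv f x v0\<bar> < \<epsilon> / 2)" by metis
  have close: "\<bar>dderiv f x v - dderiv f x v0\<bar> \<le> \<epsilon> / 2"
    if v0: "v0 \<in> V" and v: "v \<in> V" "norm (v - v0) < \<delta> v0" for v v0
  proof -
    have t: "((\<lambda>\<alpha>. \<bar>Q \<alpha> v - dderiv f x v0\<bar>) \<longlongrightarrow> \<bar>dderiv f x v - dderiv f x v0\<bar>) (at_right 0)"
      unfolding Q_def by (intro tendsto_intros dderiv_tendsto dd)
    have "\<forall>\<^sub>F \<alpha> in at_right 0. \<bar>Q \<alpha> v - dderiv f x v0\<bar> \<le> \<epsilon> / 2"
      unfolding eventually_at_right_field
      using \<delta> v0 v sp by (intro exI[of _ "\<delta> v0"]) (auto intro: less_imp_le)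
    then show ?thesis using tendsto_upperbound[OF t] trivial_limit_at_right_real by blast
  qed
  have "V \<subseteq> \<Union> ((\<lambda>v0. ball v0 (\<delta> v0)) ` V)" using \<delta> by force
  then obtain T where T: "T \<subseteq> V" "finite T" "V \<subseteq> \<Union> ((\<lambda>v0. ball v0 (\<delta> v0)) ` T)"
    using compactE_image[OF cV, of V "\<lambda>v0. ball v0 (\<delta> v0)"] by auto
  define a0 where "a0 = (if T = {} then 1 else Min (\<delta> ` T))"
  have a0pos: "a0 > 0" unfolding a0_def using T \<delta> by auto
  have a0le: "a0 \<le> \<delta> v0" if "v0 \<in> T" for v0 unfolding a0_def using T that by auto
  have "\<forall>v\<in>V. \<bar>Q \<alpha> v - dderiv f x v\<bar> < \<epsilon>" if \<alpha>: "0 < \<alpha>" "\<alpha> < a0" for \<alpha>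
  proof
    fix v assume v: "v \<in> V"
    then obtain v0 where v0: "v0 \<in> T" "dist v0 v < \<delta> v0" using T by auto
    have nv: "norm (v - v0) < \<delta> v0" using v0 by (simp add: dist_norm norm_minus_commute)
    have "\<bar>Q \<alpha> v - dderiv f x v0\<bar> < \<epsilon> / 2"
      using \<delta> v0 T v sp nv \<alpha> a0le[OF v0(1)] by auto
    moreover have "\<bar>dderiv f x v - dderiv f x v0\<bar> \<le> \<epsilon> / 2" using close v0 T v nv by auto
    ultimately show "\<bar>Q \<alpha> v - dderiv f x v\<bar> < \<epsilon>" by linarith
  qed
  then show ?thesis unfolding eventually_at_right_field Q_def using a0pos by blast
qed

lemma cont_coord: "continuous_on S (\<lambda>x::'i \<Rightarrow> 'b::topological_space. x i)"
  by (rule continuous_on_subset[OF continuous_on_product_coordinates]) auto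

lemma lin_bound:
  fixes a :: "'a::real_vector \<Rightarrow> real" and m :: nat
  assumes lin: "linear a" and av: "a v \<le> 0" and i: "i < m" and eta: "\<eta> \<ge> 0"
    and oth: "\<forall>j<m. j \<noteq> i \<longrightarrow> a (Q j) \<le> 0 \<and> a (P j) \<le> 0"
  shows "a (v + \<eta> *\<^sub>R (\<Sum>j<m. max (t j) 0 *\<^sub>R Q j + max (- t j) 0 *\<^sub>R P j))
          \<le> \<eta> * (max (t i) 0 * a (Q i) + max (- t i) 0 * a (P i))"
proof -
  have sc: "a (c *\<^sub>R u) = c * a u" for c u using real_vector.linear_scale[OF lin] by simp
  have ad: "a (u1 + u2) = a u1 + a u2" for u1 u2 using real_vector.linear_add[OF lin] .
  define T where "T j = max (t j) 0 * a (Q j) + max (- t j) 0 * a (P j)" for j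
  have sm: "a (\<Sum>j<m. max (t j) 0 *\<^sub>R Q j + max (- t j) 0 *\<^sub>R P j) = (\<Sum>j<m. T j)"
    using real_vector.linear_sum[OF lin, of "\<lambda>j. max (t j) 0 *\<^sub>R Q j + max (- t j) 0 *\<^sub>R P j" "{..<m}"]
    by (simp add: ad sc T_def)
  have "(\<Sum>j<m. T j) = T i + (\<Sum>j\<in>{..<m} - {i}. T j)" using i by (intro sum.remove) auto
  also have "(\<Sum>j\<in>{..<m} - {i}. T j) \<le> 0"
    using oth unfolding T_def by (intro sum_nonpos) (auto intro!: add_nonpos_nonpos mult_nonneg_nonpos)
  finally have "(\<Sum>j<m. T j) \<le> T i" by simp
  then have "\<eta> * (\<Sum>j<m. T j) \<le> \<eta> * T i" using eta by (rule mult_left_mono)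
  then show ?thesis using av by (simp add: ad sc sm T_def)
qed

lemma wcc_props:
  assumes "wstar_convex_compact S"
  shows "compact S" "S \<noteq> {}" "fconv S" "S \<subseteq> dual_space" "\<forall>a\<in>S. linear a"
proof -
  show "S \<subseteq> dual_space" using assms unfolding wstar_convex_compact_def by auto
  then show "\<forall>a\<in>S. linear a" by (rule dual_linear)
qed (use assms in \<open>auto simp: wstar_convex_compact_def fconv_def\<close>)

lemma dual_fplus: "S \<subseteq> dual_space \<Longrightarrow> y \<in> dual_space \<Longrightarrow> fplus S y \<subseteq> dual_space"
  unfolding fplus_def dual_space_def by (auto intro: bounded_linear_add)

lemma dual_fneg: "S \<subseteq> dual_space \<Longrightarrow> fneg S \<subseteq> dual_space"
  unfolding fneg_def dual_space_def by (auto intro: bounded_linear_minus)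

lemma dual_neg: "y \<in> dual_space \<Longrightarrow> (\<lambda>x. - y x) \<in> dual_space"
  unfolding dual_space_def by (auto intro: bounded_linear_minus)

lemma ne_fplus: "S \<noteq> {} \<Longrightarrow> fplus S y \<noteq> {}" unfolding fplus_def by auto
lemma ne_fneg: "S \<noteq> {} \<Longrightarrow> fneg S \<noteq> {}" unfolding fneg_def by auto

lemma key_step:
  fixes f :: "nat \<Rightarrow> 'a::real_normed_vector \<Rightarrow> real" and A B C :: "nat \<Rightarrow> ('a \<Rightarrow> real) set"
    and pp qq :: "nat \<Rightarrow> 'a" and m :: nat and \<eta> :: real
  assumes m1: "m \<ge> 1"
    and xb0: "\<forall>k\<in>{1..m}. f k xb = 0"
    and contf: "\<forall>k\<in>{1..m}. \<exists>r>0. continuous_on (ball xb r) (f k)"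
    and du: "\<forall>k\<in>{1..m}. dir_diff_unif (f k) xb"
    and upper: "\<forall>k\<in>{1..m}. \<forall>w. dderiv (f k) xb w \<le> supp (A k) w"
    and lower: "\<forall>k\<in>{1..m}. \<forall>w. - supp (B k) w \<le> dderiv (f k) xb w"
    and props: "\<forall>k\<in>{1..m}. compact (A k) \<and> A k \<noteq> {} \<and> (\<forall>a\<in>A k. linear a) \<and>
                             compact (B k) \<and> B k \<noteq> {} \<and> (\<forall>a\<in>B k. linear a)"
    and CAB: "\<forall>k. C k = A k \<union> B k"
    and pp: "\<forall>k\<in>{1..m}. (\<forall>a\<in>A k. a (pp k) \<le> -1) \<and> (\<forall>j\<in>{1..m}. j \<noteq> k \<longrightarrow> (\<forall>c\<in>C j. c (pp k) \<le> 0))"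
    and qq: "\<forall>k\<in>{1..m}. (\<forall>a\<in>B k. a (qq k) \<le> -1) \<and> (\<forall>j\<in>{1..m}. j \<noteq> k \<longrightarrow> (\<forall>c\<in>C j. c (qq k) \<le> 0))"
    and vS: "\<forall>k\<in>{1..m}. supp (A k) v \<le> 0 \<and> supp (B k) v \<le> 0"
    and eta: "\<eta> > 0"
  shows "\<exists>\<alpha> u. 0 < \<alpha> \<and> \<alpha> < \<eta> \<and> norm (u - v) \<le> \<eta> * (\<Sum>j<m. norm (qq (Suc j)) + norm (pp (Suc j)))
            \<and> (\<forall>k\<in>{1..m}. f k (xb + \<alpha> *\<^sub>R u) = 0)"
proof -
  define \<phi> where "\<phi> t = v + \<eta> *\<^sub>R (\<Sum>j<m. max (t j) 0 *\<^sub>R qq (Suc j) + max (- t j) 0 *\<^sub>R pp (Suc j))"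
    for t :: "nat \<Rightarrow> real"
  define W where "W = (\<lambda>j. qq (Suc j)) ` {..<m} \<union> (\<lambda>j. pp (Suc j)) ` {..<m}"
  have fW: "finite W" unfolding W_def by auto
  have c\<phi>: "continuous_on (ballm m) \<phi>" unfolding \<phi>_def
    by (intro continuous_intros cont_coord)
  define V where "V = \<phi> ` ballm m"
  have cV: "compact V" unfolding V_def by (rule compact_continuous_image[OF c\<phi> compact_ballm])
  have spv: "\<phi> t - v \<in> span W" for t
  proof -
    have "(\<Sum>j<m. max (t j) 0 *\<^sub>R qq (Suc j) + max (- t j) 0 *\<^sub>R pp (Suc j)) \<in> span W"
      unfolding W_def by (intro span_sum span_add span_scale span_base) auto
    then show ?thesis unfolding \<phi>_def by (simp add: span_scale)
  qed
  have spV: "\<forall>v1\<in>V. \<forall>v2\<in>V. v1 - v2 \<in> span W"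
  proof (intro ballI)
    fix v1 v2 assume "v1 \<in> V" "v2 \<in> V"
    then obtain t1 t2 where "v1 = \<phi> t1" "v2 = \<phi> t2" unfolding V_def by auto
    then have "v1 - v2 = (\<phi> t1 - v) - (\<phi> t2 - v)" by simp
    then show "v1 - v2 \<in> span W" using spv span_diff by metis
  qed
  have sign: "\<eta> * (t i)\<^sup>2 \<le> t i * dderiv (f (Suc i)) xb (\<phi> t)" if t: "t \<in> ballm m" and i: "i < m" for t i
  proof -
    define k where "k = Suc i"
    have k: "k \<in> {1..m}" unfolding k_def using i by auto
    have oth: "c (qq (Suc j)) \<le> 0 \<and> c (pp (Suc j)) \<le> 0" if "c \<in> C k" "j < m" "j \<noteq> i" for c j
    proof -
      have j: "Suc j \<in> {1..m}" "k \<noteq> Suc j" using that unfolding k_def by auto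
      show ?thesis using pp[rule_format, OF j(1)] qq[rule_format, OF j(1)] k j(2) that(1) by blast
    qed
    show ?thesis
    proof (cases "t i \<le> 0")
      case True
      have "a (\<phi> t) \<le> \<eta> * t i" if a: "a \<in> A k" for a
      proof -
        have lin: "linear a" using props k a by blast
        have av: "a v \<le> 0" using supp_upper[of "A k" a v] props k a vS by force
        have "a (\<phi> t) \<le> \<eta> * (max (t i) 0 * a (qq (Suc i)) + max (- t i) 0 * a (pp (Suc i)))"
          unfolding \<phi>_def
        proof (rule lin_bound[OF lin av i less_imp_le[OF eta]])
          show "\<forall>j<m. j \<noteq> i \<longrightarrow> a (qq (Suc j)) \<le> 0 \<and> a (pp (Suc j)) \<le> 0"
            using oth a CAB by blast
        qed
        also have "\<dots> = \<eta> * ((- t i) * a (pp k))" using True unfolding k_def by simp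
        also have "\<dots> \<le> \<eta> * ((- t i) * (-1))"
          using pp k a True eta by (intro mult_left_mono) (auto intro: mult_left_mono)
        finally show ?thesis by simp
      qed
      then have "supp (A k) (\<phi> t) \<le> \<eta> * t i" using props k by (intro supp_least) auto
      then have "dderiv (f k) xb (\<phi> t) \<le> \<eta> * t i" using upper k by (meson order.trans)
      then have "t i * (\<eta> * t i) \<le> t i * dderiv (f k) xb (\<phi> t)" using True by (rule mult_left_mono_neg)
      then show ?thesis unfolding k_def by (simp add: power2_eq_square algebra_simps)
    next
      case False
      have "b (\<phi> t) \<le> - (\<eta> * t i)" if b: "b \<in> B k" for b
      proof -
        have lin: "linear b" using props k b by blast
        have bv: "b v \<le> 0" using supp_upper[of "B k" b v] props k b vS by force
        have "b (\<phi> t) \<le> \<eta> * (max (t i) 0 * b (qq (Suc i)) + max (- t i) 0 * b (pp (Suc i)))"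
          unfolding \<phi>_def
        proof (rule lin_bound[OF lin bv i less_imp_le[OF eta]])
          show "\<forall>j<m. j \<noteq> i \<longrightarrow> b (qq (Suc j)) \<le> 0 \<and> b (pp (Suc j)) \<le> 0"
            using oth b CAB by blast
        qed
        also have "\<dots> = \<eta> * (t i * b (qq k))" using False unfolding k_def by simp
        also have "\<dots> \<le> \<eta> * (t i * (-1))"
          using qq k b False eta by (intro mult_left_mono) (auto intro: mult_left_mono)
        finally show ?thesis by simp
      qed
      then have "supp (B k) (\<phi> t) \<le> - (\<eta> * t i)" using props k by (intro supp_least) auto
      then have "\<eta> * t i \<le> dderiv (f k) xb (\<phi> t)" using lower[rule_format, OF k, of "\<phi> t"] by linarith
      then have "t i * (\<eta> * t i) \<le> t i * dderiv (f k) xb (\<phi> t)" using False by (intro mult_left_mono) auto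
      then show ?thesis unfolding k_def by (simp add: power2_eq_square algebra_simps)
    qed
  qed

  define \<epsilon> where "\<epsilon> = \<eta> / (2 * real m)"
  have epos: "\<epsilon> > 0" unfolding \<epsilon>_def using eta m1 by auto
  have ev1: "\<forall>\<^sub>F \<alpha> in at_right 0. \<forall>w\<in>V. \<bar>(f (Suc i) (xb + \<alpha> *\<^sub>R w) - f (Suc i) xb) / \<alpha> - dderiv (f (Suc i)) xb w\<bar> < \<epsilon>"
    if i: "i < m" for i
  proof (rule unif_approx[OF _ cV fW spV epos])
    show "dir_diff_unif (f (Suc i)) xb" using du i by auto
  qed
  obtain r where r: "\<forall>k\<in>{1..m}. r k > 0 \<and> continuous_on (ball xb (r k)) (f k)"
    using contf by metis
  obtain R where R: "R > 0" "\<forall>w\<in>V. norm w \<le> R"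
    using compact_imp_bounded[OF cV] unfolding bounded_pos by blast
  have ev2: "\<forall>\<^sub>F \<alpha> in at_right 0. \<alpha> * R < r (Suc i)" if i: "i < m" for i
  proof -
    have rp: "r (Suc i) > 0" using r i by auto
    show ?thesis unfolding eventually_at_right_field
    proof (intro exI[of _ "r (Suc i) / R"] conjI allI impI)
      show "0 < r (Suc i) / R" using rp R by simp
      fix \<alpha> :: real assume "0 < \<alpha>" "\<alpha> < r (Suc i) / R"
      then show "\<alpha> * R < r (Suc i)" using R by (simp add: pos_less_divide_eq)
    qed
  qed
  have "\<forall>\<^sub>F \<alpha> in at_right 0. \<forall>i\<in>{..<m}.
      (\<forall>w\<in>V. \<bar>(f (Suc i) (xb + \<alpha> *\<^sub>R w) - f (Suc i) xb) / \<alpha> - dderiv (f (Suc i)) xb w\<bar> < \<epsilon>) \<and> \<alpha> * R < r (Suc i)"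
    by (intro eventually_ball_finite ballI eventually_conj ev1 ev2) auto
  then obtain b where b: "b > 0" "\<forall>\<alpha>>0. \<alpha> < b \<longrightarrow> (\<forall>i\<in>{..<m}.
      (\<forall>w\<in>V. \<bar>(f (Suc i) (xb + \<alpha> *\<^sub>R w) - f (Suc i) xb) / \<alpha> - dderiv (f (Suc i)) xb w\<bar> < \<epsilon>) \<and> \<alpha> * R < r (Suc i))"
    unfolding eventually_at_right_field by blast
  define \<alpha> where "\<alpha> = min b \<eta> / 2"
  have \<alpha>: "0 < \<alpha>" "\<alpha> < b" "\<alpha> < \<eta>" unfolding \<alpha>_def using b eta by auto
  have P\<alpha>: "\<forall>i<m. (\<forall>w\<in>V. \<bar>(f (Suc i) (xb + \<alpha> *\<^sub>R w) - f (Suc i) xb) / \<alpha> - dderiv (f (Suc i)) xb w\<bar> < \<epsilon>) \<and> \<alpha> * R < r (Suc i)"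
    using b(2) \<alpha> by auto
  define g where "g t i = f (Suc i) (xb + \<alpha> *\<^sub>R \<phi> t) / \<alpha>" for t i
  have "\<exists>t\<in>ballm m. \<forall>i<m. g t i = 0"
  proof (rule zero_thm[OF m1])
    show "\<forall>i<m. continuous_on (ballm m) (\<lambda>t. g t i)"
    proof (intro allI impI)
      fix i assume i: "i < m"
      have k: "Suc i \<in> {1..m}" using i by auto
      have cin: "continuous_on (ballm m) (\<lambda>t. xb + \<alpha> *\<^sub>R \<phi> t)" by (intro continuous_intros c\<phi>)
      have img: "(\<lambda>t. xb + \<alpha> *\<^sub>R \<phi> t) ` ballm m \<subseteq> ball xb (r (Suc i))"
      proof
        fix y assume "y \<in> (\<lambda>t. xb + \<alpha> *\<^sub>R \<phi> t) ` ballm m"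
        then obtain t where t: "t \<in> ballm m" "y = xb + \<alpha> *\<^sub>R \<phi> t" by auto
        have "norm (\<phi> t) \<le> R" using R t unfolding V_def by auto
        then have "\<alpha> * norm (\<phi> t) \<le> \<alpha> * R" using \<alpha> by (intro mult_left_mono) auto
        also have "\<dots> < r (Suc i)" using P\<alpha> i by auto
        finally show "y \<in> ball xb (r (Suc i))" using t \<alpha> by (simp add: dist_norm)
      qed
      have "continuous_on (ballm m) (\<lambda>t. f (Suc i) (xb + \<alpha> *\<^sub>R \<phi> t))"
        using continuous_on_compose2[OF _ cin img] r k by blast
      then show "continuous_on (ballm m) (\<lambda>t. g t i)" unfolding g_def
        using \<alpha> by (intro continuous_on_divide continuous_on_const) auto
    qed
    show "\<forall>t\<in>spherem m. 0 < (\<Sum>i<m. t i * g t i)"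
    proof
      fix t assume ts: "t \<in> spherem m"
      then have tb: "t \<in> ballm m" using spherem_sub by auto
      have trm: "\<eta> * (t i)\<^sup>2 - \<epsilon> \<le> t i * g t i" if i: "i < m" for i
      proof -
        define d where "d = dderiv (f (Suc i)) xb (\<phi> t)"
        have "\<phi> t \<in> V" unfolding V_def using tb by auto
        then have "\<bar>(f (Suc i) (xb + \<alpha> *\<^sub>R \<phi> t) - f (Suc i) xb) / \<alpha> - d\<bar> < \<epsilon>"
          using P\<alpha> i unfolding d_def by auto
        moreover have "f (Suc i) xb = 0" using xb0 i by auto
        ultimately have gd: "\<bar>g t i - d\<bar> < \<epsilon>" unfolding g_def by simp
        have s: "\<eta> * (t i)\<^sup>2 \<le> t i * d" unfolding d_def by (rule sign[OF tb i])
        have "\<bar>t i * (g t i - d)\<bar> = \<bar>t i\<bar> * \<bar>g t i - d\<bar>" by (simp add: abs_mult)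
        also have "\<dots> \<le> \<bar>g t i - d\<bar>" using ballm_abs[OF tb, of i] by (intro mult_left_le_one_le) auto
        finally have "- \<epsilon> \<le> t i * (g t i - d)" using gd by linarith
        then show ?thesis using s by (simp add: algebra_simps)
      qed
      have "(\<Sum>i<m. \<eta> * (t i)\<^sup>2 - \<epsilon>) \<le> (\<Sum>i<m. t i * g t i)" using trm by (intro sum_mono) auto
      moreover have "(\<Sum>i<m. \<eta> * (t i)\<^sup>2 - \<epsilon>) = \<eta> / 2"
      proof -
        have "(\<Sum>i<m. \<eta> * (t i)\<^sup>2 - \<epsilon>) = \<eta> * (\<Sum>i<m. (t i)\<^sup>2) - real m * \<epsilon>"
          by (simp add: sum_subtractf sum_distrib_left)
        also have "\<dots> = \<eta> - \<eta> / 2" using ts m1 unfolding spherem_def \<epsilon>_def by auto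
        finally show ?thesis by simp
      qed
      ultimately show "0 < (\<Sum>i<m. t i * g t i)" using eta by linarith
    qed
  qed
  then obtain t where t: "t \<in> ballm m" "\<forall>i<m. g t i = 0" by blast
  have inM: "\<forall>k\<in>{1..m}. f k (xb + \<alpha> *\<^sub>R \<phi> t) = 0"
  proof
    fix k assume k: "k \<in> {1..m}"
    then have "k - 1 < m" "Suc (k - 1) = k" by auto
    then have "g t (k - 1) = 0" using t by auto
    then show "f k (xb + \<alpha> *\<^sub>R \<phi> t) = 0" unfolding g_def using \<alpha> \<open>Suc (k - 1) = k\<close> by simp
  qed
  have nrm: "norm (\<phi> t - v) \<le> \<eta> * (\<Sum>j<m. norm (qq (Suc j)) + norm (pp (Suc j)))"
  proof -
    have "norm (\<Sum>j<m. max (t j) 0 *\<^sub>R qq (Suc j) + max (- t j) 0 *\<^sub>R pp (Suc j))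
          \<le> (\<Sum>j<m. norm (max (t j) 0 *\<^sub>R qq (Suc j) + max (- t j) 0 *\<^sub>R pp (Suc j)))"
      by (rule norm_sum)
    also have "\<dots> \<le> (\<Sum>j<m. norm (qq (Suc j)) + norm (pp (Suc j)))"
    proof (rule sum_mono)
      fix j assume "j \<in> {..<m}"
      have a1: "\<bar>max (t j) 0\<bar> \<le> 1" "\<bar>max (- t j) 0\<bar> \<le> 1" using ballm_abs[OF t(1), of j] by auto
      have "norm (max (t j) 0 *\<^sub>R qq (Suc j) + max (- t j) 0 *\<^sub>R pp (Suc j))
            \<le> norm (max (t j) 0 *\<^sub>R qq (Suc j)) + norm (max (- t j) 0 *\<^sub>R pp (Suc j))" by (rule norm_triangle_ineq)
      also have "\<dots> = \<bar>max (t j) 0\<bar> * norm (qq (Suc j)) + \<bar>max (- t j) 0\<bar> * norm (pp (Suc j))" by simp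
      also have "\<dots> \<le> 1 * norm (qq (Suc j)) + 1 * norm (pp (Suc j))"
        using a1 by (intro add_mono mult_right_mono) auto
      finally show "norm (max (t j) 0 *\<^sub>R qq (Suc j) + max (- t j) 0 *\<^sub>R pp (Suc j))
            \<le> norm (qq (Suc j)) + norm (pp (Suc j))" by simp
    qed
    finally have "norm (\<Sum>j<m. max (t j) 0 *\<^sub>R qq (Suc j) + max (- t j) 0 *\<^sub>R pp (Suc j))
          \<le> (\<Sum>j<m. norm (qq (Suc j)) + norm (pp (Suc j)))" .
    then show ?thesis unfolding \<phi>_def using eta by (simp add: mult_left_mono)
  qed
  show ?thesis using \<alpha> nrm inM by blast
qed

theorem corollary1:
  fixes f :: "nat \<Rightarrow> 'a::banach \<Rightarrow> real"
    and Dl Du :: "nat \<Rightarrow> ('a \<Rightarrow> real) set"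
    and xs ys :: "nat \<Rightarrow> 'a \<Rightarrow> real"
    and m :: nat and M :: "'a set" and xb :: 'a
    and C :: "nat \<Rightarrow> ('a \<Rightarrow> real) set"
  assumes "m \<ge> 1"
    and M_def: "M = {x. \<forall>i\<in>{1..m}. f i x = 0}"
    and "xb \<in> M"
    and "\<forall>i\<in>{1..m}. \<exists>r>0. continuous_on (ball xb r) (f i)"
    and "\<forall>i\<in>{1..m}. quasidiff_unif (f i) xb (Dl i) (Du i)"
    and "\<forall>i\<in>{1..m}. xs i \<in> Dl i \<and> ys i \<in> Du i"
    and C_def: "\<forall>i. C i = fplus (Dl i) (ys i) \<union> fplus (fneg (Du i)) (\<lambda>x. - xs i x)"
    and "\<forall>i\<in>{1..m}. C i \<inter> wstar_closure (cone_fam {fneg (C k) | k. k \<in> {1..m} \<and> k \<noteq> i}) = {}"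
  shows "{v. \<forall>i\<in>{1..m}. supp (fplus (Dl i) (ys i)) v \<le> 0 \<and>
                         supp (fplus (fneg (Du i)) (\<lambda>x. - xs i x)) v \<le> 0}
           \<subseteq> contingent_cone M xb"
proof
  fix v assume "v \<in> {v. \<forall>i\<in>{1..m}. supp (fplus (Dl i) (ys i)) v \<le> 0 \<and>
                         supp (fplus (fneg (Du i)) (\<lambda>x. - xs i x)) v \<le> 0}"
  then have vS: "\<forall>i\<in>{1..m}. supp (fplus (Dl i) (ys i)) v \<le> 0 \<and> supp (fplus (fneg (Du i)) (\<lambda>x. - xs i x)) v \<le> 0"
    by simp
  have m1: "m \<ge> 1" and xbM: "xb \<in> M" and contf: "\<forall>i\<in>{1..m}. \<exists>r>0. continuous_on (ball xb r) (f i)"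
    and qd: "\<forall>i\<in>{1..m}. quasidiff_unif (f i) xb (Dl i) (Du i)"
    and xsys: "\<forall>i\<in>{1..m}. xs i \<in> Dl i \<and> ys i \<in> Du i"
    and sepH: "\<forall>i\<in>{1..m}. C i \<inter> wstar_closure (cone_fam {fneg (C k) | k. k \<in> {1..m} \<and> k \<noteq> i}) = {}"
    using assms by auto
  define A where "A i = fplus (Dl i) (ys i)" for i
  define B where "B i = fplus (fneg (Du i)) (\<lambda>x. - xs i x)" for i
  have CAB: "C i = A i \<union> B i" for i using C_def unfolding A_def B_def by simp
  have propA: "compact (A k) \<and> A k \<noteq> {} \<and> fconv (A k) \<and> A k \<subseteq> dual_space \<and> (\<forall>a\<in>A k. linear a)"
   and propB: "compact (B k) \<and> B k \<noteq> {} \<and> fconv (B k) \<and> B k \<subseteq> dual_space \<and> (\<forall>a\<in>B k. linear a)"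
    if k: "k \<in> {1..m}" for k
  proof -
    have w1: "wstar_convex_compact (Dl k)" and w2: "wstar_convex_compact (Du k)"
      using qd k unfolding quasidiff_unif_def by auto
    note P1 = wcc_props[OF w1] and P2 = wcc_props[OF w2]
    have ysd: "ys k \<in> dual_space" using xsys k P2(4) by auto
    have "xs k \<in> dual_space" using xsys k P1(4) by auto
    then have xsd: "(\<lambda>x. - xs k x) \<in> dual_space" by (rule dual_neg)
    have dA: "A k \<subseteq> dual_space" unfolding A_def using dual_fplus[OF P1(4) ysd] .
    have dB: "B k \<subseteq> dual_space" unfolding B_def using dual_fplus[OF dual_fneg[OF P2(4)] xsd] .
    show "compact (A k) \<and> A k \<noteq> {} \<and> fconv (A k) \<and> A k \<subseteq> dual_space \<and> (\<forall>a\<in>A k. linear a)"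
      unfolding A_def using dA[unfolded A_def] dual_linear[OF dA[unfolded A_def]]
      by (intro conjI compact_fplus ne_fplus fconv_fplus P1(1) P1(2) P1(3)) auto
    show "compact (B k) \<and> B k \<noteq> {} \<and> fconv (B k) \<and> B k \<subseteq> dual_space \<and> (\<forall>a\<in>B k. linear a)"
      unfolding B_def using dB[unfolded B_def] dual_linear[OF dB[unfolded B_def]]
      by (intro conjI compact_fplus compact_fneg ne_fplus ne_fneg fconv_fplus fconv_fneg P2(1) P2(2) P2(3)) auto
  qed
  have linC: "\<forall>c\<in>C j. linear c" if "j \<in> {1..m}" for j
    using propA[OF that] propB[OF that] unfolding CAB by auto
  have sep_gen: "\<exists>p. (\<forall>a\<in>E. a p \<le> -1) \<and> (\<forall>j\<in>{1..m}. j \<noteq> k \<longrightarrow> (\<forall>c\<in>C j. c p \<le> 0))"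
    if k: "k \<in> {1..m}" and E: "E \<subseteq> C k" "compact E" "E \<noteq> {}" "fconv E" "E \<subseteq> dual_space" for k E
  proof -
    define F where "F = {fneg (C j) | j. j \<in> {1..m} \<and> j \<noteq> k}"
    have linF: "\<forall>c\<in>\<Union>F. linear c"
    proof
      fix c assume "c \<in> \<Union>F"
      then obtain j where j: "j \<in> {1..m}" "c \<in> fneg (C j)" unfolding F_def by auto
      then show "linear c" using lin_fneg_mem[OF linC[OF j(1)]] by auto
    qed
    have dis: "E \<inter> closure (cone_fam F) = {}"
    proof -
      have h: "C k \<inter> (closure (cone_fam F) \<inter> dual_space) = {}"
        using sepH[rule_format, OF k] unfolding F_def wstar_closure_def .
      show ?thesis
      proof (rule equals0I)
        fix a assume a: "a \<in> E \<inter> closure (cone_fam F)"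
        then have "a \<in> C k" "a \<in> dual_space" "a \<in> closure (cone_fam F)" using E(1) E(5) by (blast, blast, blast)
        then have "a \<in> C k \<inter> (closure (cone_fam F) \<inter> dual_space)" by (intro IntI)
        then show False unfolding h by (rule emptyE)
      qed
    qed
    have "\<exists>p. (\<forall>a\<in>E. a p \<le> -1) \<and> (\<forall>c\<in>\<Union>F. 0 \<le> c p)"
      by (rule separation[OF E(2) E(3) E(4) dual_linear[OF E(5)] linF dis])
    then obtain p where p: "\<forall>a\<in>E. a p \<le> -1" "\<forall>c\<in>\<Union>F. 0 \<le> c p" by (elim exE conjE)
    have "c p \<le> 0" if j: "j \<in> {1..m}" "j \<noteq> k" and c: "c \<in> C j" for j c
    proof -
      have "(\<lambda>x. - c x) \<in> fneg (C j)" unfolding fneg_def using c by auto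
      moreover have "fneg (C j) \<in> F" unfolding F_def using j by auto
      ultimately have "(\<lambda>x. - c x) \<in> \<Union>F" by (rule UnionI[rotated])
      then have "0 \<le> (\<lambda>x. - c x) p" using p(2) by (rule bspec[rotated])
      then show ?thesis by simp
    qed
    then show ?thesis using p(1) by (intro exI[of _ p]) simp
  qed
  have "\<forall>k\<in>{1..m}. \<exists>p. (\<forall>a\<in>A k. a p \<le> -1) \<and> (\<forall>j\<in>{1..m}. j \<noteq> k \<longrightarrow> (\<forall>c\<in>C j. c p \<le> 0))"
    using sep_gen propA unfolding CAB by (intro ballI sep_gen) auto
  then obtain pp where pp: "\<forall>k\<in>{1..m}. (\<forall>a\<in>A k. a (pp k) \<le> -1) \<and> (\<forall>j\<in>{1..m}. j \<noteq> k \<longrightarrow> (\<forall>c\<in>C j. c (pp k) \<le> 0))"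
    by metis
  have "\<forall>k\<in>{1..m}. \<exists>p. (\<forall>a\<in>B k. a p \<le> -1) \<and> (\<forall>j\<in>{1..m}. j \<noteq> k \<longrightarrow> (\<forall>c\<in>C j. c p \<le> 0))"
    using sep_gen propB unfolding CAB by (intro ballI sep_gen) auto
  then obtain qq where qq: "\<forall>k\<in>{1..m}. (\<forall>a\<in>B k. a (qq k) \<le> -1) \<and> (\<forall>j\<in>{1..m}. j \<noteq> k \<longrightarrow> (\<forall>c\<in>C j. c (qq k) \<le> 0))"
    by metis
  have xb0: "\<forall>k\<in>{1..m}. f k xb = 0" using xbM unfolding M_def by auto
  have du: "\<forall>k\<in>{1..m}. dir_diff_unif (f k) xb" using qd unfolding quasidiff_unif_def by auto
  have upper: "\<forall>k\<in>{1..m}. \<forall>w. dderiv (f k) xb w \<le> supp (A k) w"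
    unfolding A_def using qd xsys qd_bounds(1) by blast
  have lower: "\<forall>k\<in>{1..m}. \<forall>w. - supp (B k) w \<le> dderiv (f k) xb w"
    unfolding B_def using qd xsys qd_bounds(2) by blast
  have props: "\<forall>k\<in>{1..m}. compact (A k) \<and> A k \<noteq> {} \<and> (\<forall>a\<in>A k. linear a) \<and>
                             compact (B k) \<and> B k \<noteq> {} \<and> (\<forall>a\<in>B k. linear a)"
    using propA propB by blast
  have CAB': "\<forall>k. C k = A k \<union> B k" using CAB by blast
  have vS': "\<forall>k\<in>{1..m}. supp (A k) v \<le> 0 \<and> supp (B k) v \<le> 0" using vS unfolding A_def B_def .
  define L where "L = (\<Sum>j<m. norm (qq (Suc j)) + norm (pp (Suc j)))"
  have "\<exists>\<alpha> u. 0 < \<alpha> \<and> \<alpha> < inverse (real (Suc n)) \<and> norm (u - v) \<le> inverse (real (Suc n)) * L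
            \<and> (\<forall>k\<in>{1..m}. f k (xb + \<alpha> *\<^sub>R u) = 0)" for n
    unfolding L_def
    by (rule key_step[OF m1 xb0 contf du upper lower props CAB' pp qq vS']) simp
  then obtain as us where asus: "\<And>n. 0 < as n" "\<And>n. as n < inverse (real (Suc n))"
      "\<And>n. norm (us n - v) \<le> inverse (real (Suc n)) * L" "\<And>n. \<forall>k\<in>{1..m}. f k (xb + as n *\<^sub>R us n) = 0"
    by metis
  have as0: "as \<longlonglongrightarrow> 0"
  proof (rule tendsto_sandwich[of "\<lambda>n. 0" _ _ "\<lambda>n. inverse (real (Suc n))"])
    show "\<forall>\<^sub>F n in sequentially. 0 \<le> as n" using asus(1) by (intro always_eventually allI less_imp_le)
    show "\<forall>\<^sub>F n in sequentially. as n \<le> inverse (real (Suc n))" using asus(2) by (intro always_eventually allI less_imp_le)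
    show "(\<lambda>n. inverse (real (Suc n))) \<longlonglongrightarrow> 0" by (rule LIMSEQ_inverse_real_of_nat)
  qed simp
  have "(\<lambda>n. us n - v) \<longlonglongrightarrow> 0"
  proof (rule Lim_null_comparison)
    show "\<forall>\<^sub>F n in sequentially. norm (us n - v) \<le> inverse (real (Suc n)) * L" using asus(3) by (intro always_eventually allI)
    show "(\<lambda>n. inverse (real (Suc n)) * L) \<longlonglongrightarrow> 0"
      using tendsto_mult[OF LIMSEQ_inverse_real_of_nat tendsto_const[of L]] by simp
  qed
  then have usv: "us \<longlonglongrightarrow> v" by (rule LIM_zero_cancel)
  have "\<forall>n. xb + as n *\<^sub>R us n \<in> M" unfolding M_def using asus(4) by auto
  then show "v \<in> contingent_cone M xb" unfolding contingent_cone_def using asus(1) as0 usv by blast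
qed

end
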